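(* Fix a ROMDP satisfying Assumptions 1 and 2 below, a deterministic observation-based policy $\pi$, and an action $l\in[A]$. Let $M_2^{(l)}=U\Sigma U^{\mathsf T}$ be an eigendecomposition of the second moment $M_2^{(l)}$. If all nonzero eigenvalues of $M_2^{(l)}$ have multiplicity 1, then there exist a mapping $\sigma^{(l)}:\mathcal X\to\mathcal X$ and multiplicative constants $\{C_i^{(l)}\}_{i\in[X]}$ such that for every $i\in\mathcal X_\pi^{(l)}$ and $j\in[Y]$, $[V_2^{(l)}]_{j,\sigma^{(l)}(i)}=C_i^{(l)}[U]_{j,i}$ (indexing the eigenvectors of nonzero eigenvalues by $i\in\mathcal X_\pi^{(l)}$). Consequently, defining for each $i\in\mathcal X_\pi^{(l)}$ the cluster $\widetilde{\mathcal Y}_i^{(l)}=\{j\in[Y]:[U]_{j,i}>0\}$, if $j,j'\in\widetilde{\mathcal Y}_i^{(l)}$ then $j,j'\in\mathcal Y_{\sigma^{(l)}(i)}$.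
   Context: A rich-observation MDP (ROMDP) consists of finite sets of hidden states $\mathcal X=[X]$, observations $\mathcal Y=[Y]$, actions $\mathcal A=[A]$ with $X\le Y$; transitions $T_{i',i,l}=\mathbb P(x'=i'\mid x=i,a=l)$; observation matrix $O_{j,i}=\mathbb P(y=j\mid x=i)$ with each observation $j$ having exactly one hidden state with $O_{j,i}>0$, and $\mathcal Y_i=\{j:O_{j,i}>0\}$; rewards depending on hidden state and action. Policies are deterministic maps $\pi:\mathcal Y\to\mathcal A$. Assumption 1: every such $\pi$ induces an ergodic Markov chain on hidden states. Assumption 2: each $T_{\cdot,\cdot,l}$ is full rank. For policy $\pi$: $\omega_\pi^{(l)}(i)=\mathbb P_\pi(x=i\mid a=l)$ under stationarity; $\mathcal X_\pi^{(l)}=\{i:\omega_\pi^{(l)}(i)>0\}$; with $\vec v_1,\vec v_2,\vec v_3\in\{0,1\}^Y$ the one-hot encodings of three consecutive observations $y_{t-1},y_t,y_{t+1}$ of the stationary process and $x_2,a_2$ the hidden state and action at time $t$, $[V_p^{(l)}]_{j,i}=\mathbb P(\vec v_p=e_j\mid x_2=i,a_2=l)$, in particular $V_2^{(l)}$ has columns indexed by $i\in\mathcal X_\pi^{(l)}$. $K_{p,q}^{(l)}=\mathbb E[\vec v_p\otimes\vec v_q\mid a_2=l]$; symmetrized views $\tilde v_1=K_{2,3}^{(l)}(K_{1,3}^{(l)})^\dagger\vec v_1$, $\tilde v_3=K_{2,1}^{(l)}(K_{3,1}^{(l)})^\dagger\vec v_3$; $M_2^{(l)}=\mathbb E[\tilde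 v_1\otimes\tilde v_3\mid a_2=l]=\sum_{i\in\mathcal X_\pi^{(l)}}\omega_\pi^{(l)}(i)[V_2^{(l)}]_{:,i}\otimes[V_2^{(l)}]_{:,i}$. *)

theory Defs
  imports "HOL-Analysis.Analysis"
begin

text \<open>ROMDP with hidden states 'x, observations 'y, actions 'a (finite types).
  T i' i l = P(x' = i' | x = i, a = l);  Ob j i = P(y = j | x = i).\<close>

definition romdp :: "('x::finite \<Rightarrow> 'x \<Rightarrow> 'a::finite \<Rightarrow> real) \<Rightarrow> ('y::finite \<Rightarrow> 'x \<Rightarrow> real) \<Rightarrow> bool" where
  "romdp T Ob \<longleftrightarrow>
     CARD('x) \<le> CARD('y) \<and>
     (\<forall>i' i l. T i' i l \<ge> 0) \<and> (\<forall>i l. (\<Sum>i'\<in>UNIV. T i' i l) = 1) \<and>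
     (\<forall>j i. Ob j i \<ge> 0) \<and> (\<forall>i. (\<Sum>j\<in>UNIV. Ob j i) = 1) \<and>
     (\<forall>j. \<exists>!i. Ob j i > 0)"

definition obs_set :: "('y \<Rightarrow> 'x \<Rightarrow> real) \<Rightarrow> 'x \<Rightarrow> 'y set" where
  "obs_set Ob i = {j. Ob j i > 0}"

definition pol_trans :: "('x \<Rightarrow> 'x \<Rightarrow> 'a \<Rightarrow> real) \<Rightarrow> ('y::finite \<Rightarrow> 'x \<Rightarrow> real) \<Rightarrow> ('y \<Rightarrow> 'a) \<Rightarrow> 'x \<Rightarrow> 'x \<Rightarrow> real" where
  "pol_trans T Ob pol i' i = (\<Sum>j\<in>UNIV. Ob j i * T i' i (pol j))"

fun nstep :: "('x::finite \<Rightarrow> 'x \<Rightarrow> real) \<Rightarrow> nat \<Rightarrow> 'x \<Rightarrow> 'x \<Rightarrow> real" where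
  "nstep P 0 i' i = (if i' = i then 1 else 0)"
| "nstep P (Suc n) i' i = (\<Sum>k\<in>UNIV. P i' k * nstep P n k i)"

definition irreducible_chain :: "('x::finite \<Rightarrow> 'x \<Rightarrow> real) \<Rightarrow> bool" where
  "irreducible_chain P \<longleftrightarrow> (\<forall>i i'. \<exists>n>0. nstep P n i' i > 0)"

definition aperiodic_chain :: "('x::finite \<Rightarrow> 'x \<Rightarrow> real) \<Rightarrow> bool" where
  "aperiodic_chain P \<longleftrightarrow> (\<forall>i. Gcd {n. n > 0 \<and> nstep P n i i > 0} = 1)"

definition ergodic_chain :: "('x::finite \<Rightarrow> 'x \<Rightarrow> real) \<Rightarrow> bool" where
  "ergodic_chain P \<longleftrightarrow> irreducible_chain P \<and> aperiodic_chain P"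

definition assumption1 :: "('x::finite \<Rightarrow> 'x \<Rightarrow> 'a \<Rightarrow> real) \<Rightarrow> ('y::finite \<Rightarrow> 'x \<Rightarrow> real) \<Rightarrow> bool" where
  "assumption1 T Ob \<longleftrightarrow> (\<forall>pol :: 'y \<Rightarrow> 'a. ergodic_chain (pol_trans T Ob pol))"

definition assumption2 :: "('x::finite \<Rightarrow> 'x \<Rightarrow> 'a \<Rightarrow> real) \<Rightarrow> bool" where
  "assumption2 T \<longleftrightarrow> (\<forall>l. rank (\<chi> i' i. T i' i l :: real^'x^'x) = CARD('x))"

definition stationary :: "('x::finite \<Rightarrow> 'x \<Rightarrow> 'a \<Rightarrow> real) \<Rightarrow> ('y::finite \<Rightarrow> 'x \<Rightarrow> real) \<Rightarrow> ('y \<Rightarrow> 'a) \<Rightarrow> 'x \<Rightarrow> real" where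
  "stationary T Ob pol = (THE rho. (\<forall>i. rho i \<ge> 0) \<and> (\<Sum>i\<in>UNIV. rho i) = 1 \<and>
       (\<forall>i'. rho i' = (\<Sum>i\<in>UNIV. pol_trans T Ob pol i' i * rho i)))"

definition joint_xya :: "('x::finite \<Rightarrow> 'x \<Rightarrow> 'a \<Rightarrow> real) \<Rightarrow> ('y::finite \<Rightarrow> 'x \<Rightarrow> real) \<Rightarrow> ('y \<Rightarrow> 'a) \<Rightarrow> 'x \<Rightarrow> 'y \<Rightarrow> 'a \<Rightarrow> real" where
  "joint_xya T Ob pol i j l = stationary T Ob pol i * Ob j i * (if pol j = l then 1 else 0)"

definition omega :: "('x::finite \<Rightarrow> 'x \<Rightarrow> 'a \<Rightarrow> real) \<Rightarrow> ('y::finite \<Rightarrow> 'x \<Rightarrow> real) \<Rightarrow> ('y \<Rightarrow> 'a) \<Rightarrow> 'a \<Rightarrow> 'x \<Rightarrow> real" where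
  "omega T Ob pol l i = (\<Sum>j\<in>UNIV. joint_xya T Ob pol i j l) /
                      (\<Sum>i'\<in>UNIV. \<Sum>j\<in>UNIV. joint_xya T Ob pol i' j l)"

definition Xpi :: "('x::finite \<Rightarrow> 'x \<Rightarrow> 'a \<Rightarrow> real) \<Rightarrow> ('y::finite \<Rightarrow> 'x \<Rightarrow> real) \<Rightarrow> ('y \<Rightarrow> 'a) \<Rightarrow> 'a \<Rightarrow> 'x set" where
  "Xpi T Ob pol l = {i. omega T Ob pol l i > 0}"

text \<open>[V_2^(l)]_{j,i} = P(y_t = j | x_t = i, a_t = l) (meaningful for i in X_pi^(l)).\<close>
definition V2 :: "('x::finite \<Rightarrow> 'x \<Rightarrow> 'a \<Rightarrow> real) \<Rightarrow> ('y::finite \<Rightarrow> 'x \<Rightarrow> real) \<Rightarrow> ('y \<Rightarrow> 'a) \<Rightarrow> 'a \<Rightarrow> 'y \<Rightarrow> 'x \<Rightarrow> real" where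
  "V2 T Ob pol l j i = joint_xya T Ob pol i j l / (\<Sum>j'\<in>UNIV. joint_xya T Ob pol i j' l)"

definition M2 :: "('x::finite \<Rightarrow> 'x \<Rightarrow> 'a \<Rightarrow> real) \<Rightarrow> ('y::finite \<Rightarrow> 'x \<Rightarrow> real) \<Rightarrow> ('y \<Rightarrow> 'a) \<Rightarrow> 'a \<Rightarrow> real^'y^'y" where
  "M2 T Ob pol l = (\<chi> j j'. \<Sum>i\<in>Xpi T Ob pol l. omega T Ob pol l i * V2 T Ob pol l j i * V2 T Ob pol l j' i)"

definition diag_mat :: "real^'n \<Rightarrow> real^'n^'n" where
  "diag_mat s = (\<chi> i k. if i = k then s $ i else 0)"

definition cluster :: "real^'n^'m \<Rightarrow> 'n \<Rightarrow> 'm set" where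
  "cluster U k = {j. U $ j $ k > 0}"

end

theory Submission imports Defs begin

lemma myvecI: "(\<And>i. x $ i = y $ i) \<Longrightarrow> x = y"
  by (simp add: vec_eq_iff)

lemma diag_mv: "(diag_mat s *v z) $ i = s $ i * z $ i"
proof -
  have h: "\<And>j. (diag_mat s) $ i $ j * z $ j = (if i = j then s $ j * z $ j else 0)"
    by (simp add: diag_mat_def)
  have "(diag_mat s *v z) $ i = (\<Sum>j\<in>UNIV. if i = j then s $ j * z $ j else 0)"
    unfolding matrix_vector_mult_def by (simp only: vec_lambda_beta h)
  then show ?thesis by simp
qed

lemma eig1:
  fixes U :: "real^'n^'n"
  assumes orth: "orthogonal_matrix U" and M: "M = U ** diag_mat s ** transpose U"
    and simple: "\<forall>k k'. k \<noteq> k' \<and> s $ k \<noteq> 0 \<longrightarrow> s $ k \<noteq> s $ k'"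
    and sk: "s $ k \<noteq> 0" and ev: "M *v y = s $ k *\<^sub>R y"
  shows "y = (transpose U *v y) $ k *\<^sub>R column k U"
proof -
  define z where "z = transpose U *v y"
  have o1: "transpose U ** U = mat 1" and o2: "U ** transpose U = mat 1"
    using orth by (auto simp: orthogonal_matrix_def)
  have A: "transpose U *v (M *v y) = diag_mat s *v z"
    unfolding M z_def
    by (simp only: matrix_vector_mul_assoc matrix_mul_assoc o1 matrix_mul_lid)
  have B: "transpose U *v (M *v y) = s $ k *\<^sub>R z"
    unfolding ev z_def by (simp only: matrix_vector_mult_scaleR)
  have dz: "diag_mat s *v z = s $ k *\<^sub>R z" by (simp only: A[symmetric] B)
  have eq: "s $ k' * z $ k' = s $ k * z $ k'" for k'
  proof -
    have "(diag_mat s *v z) $ k' = (s $ k *\<^sub>R z) $ k'" by (simp only: dz)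
    then show ?thesis by (simp only: diag_mv vector_scaleR_component real_scaleR_def)
  qed
  have z0: "z $ k' = 0" if "k' \<noteq> k" for k'
  proof -
    have neq: "s $ k' \<noteq> s $ k" using simple[rule_format, of k k'] sk that by auto
    show ?thesis using eq[of k'] neq by simp
  qed
  have yz: "y = U *v z" unfolding z_def by (simp only: matrix_vector_mul_assoc o2 matrix_vector_mul_lid)
  show ?thesis
  proof (rule myvecI)
    fix j
    have "y $ j = (\<Sum>k'\<in>UNIV. U $ j $ k' * z $ k')"
      by (subst yz) (simp only: matrix_vector_mult_def vec_lambda_beta)
    also have "\<dots> = (\<Sum>k'\<in>UNIV. if k' = k then U $ j $ k * z $ k else 0)"
      by (rule sum.cong[OF refl]) (use z0 in auto)
    also have "\<dots> = U $ j $ k * z $ k" by simp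
    finally show "y $ j = ((transpose U *v y) $ k *\<^sub>R column k U) $ j"
      by (simp only: z_def column_def vector_scaleR_component vec_lambda_beta real_scaleR_def mult.commute)
  qed
qed

lemma M2_act:
  fixes V :: "'y::finite \<Rightarrow> 'x \<Rightarrow> real"
  shows "(\<chi> j j'. \<Sum>i\<in>X. w i * V j i * V j' i) *v x
     = (\<Sum>i\<in>X. (w i * ((\<chi> j. V j i) \<bullet> x)) *\<^sub>R (\<chi> j. V j i))"
proof (rule myvecI)
  fix j
  have "((\<chi> j j'. \<Sum>i\<in>X. w i * V j i * V j' i) *v x) $ j
        = (\<Sum>j'\<in>UNIV. (\<Sum>i\<in>X. w i * V j i * V j' i) * x $ j')"
    by (simp only: matrix_vector_mult_def vec_lambda_beta)
  also have "\<dots> = (\<Sum>j'\<in>UNIV. \<Sum>i\<in>X. w i * V j i * V j' i * x $ j')"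
    by (simp only: sum_distrib_right)
  also have "\<dots> = (\<Sum>i\<in>X. \<Sum>j'\<in>UNIV. w i * V j i * V j' i * x $ j')"
    by (rule sum.swap)
  also have "\<dots> = (\<Sum>i\<in>X. (w i * (\<Sum>j'\<in>UNIV. V j' i * x $ j')) * V j i)"
  proof (rule sum.cong[OF refl])
    fix i
    have "(\<Sum>j'\<in>UNIV. w i * V j i * V j' i * x $ j') = (\<Sum>j'\<in>UNIV. (w i * V j i) * (V j' i * x $ j'))"
      by (rule sum.cong[OF refl]) (simp only: mult.assoc)
    also have "\<dots> = (w i * V j i) * (\<Sum>j'\<in>UNIV. V j' i * x $ j')"
      by (simp only: sum_distrib_left)
    finally show "(\<Sum>j'\<in>UNIV. w i * V j i * V j' i * x $ j') = (w i * (\<Sum>j'\<in>UNIV. V j' i * x $ j')) * V j i"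
      by (simp only: mult.commute mult.left_commute mult.assoc)
  qed
  also have "\<dots> = (\<Sum>i\<in>X. (w i * ((\<chi> j. V j i) \<bullet> x)) *\<^sub>R (\<chi> j. V j i)) $ j"
    by (simp only: sum_component vector_scaleR_component inner_vec_def vec_lambda_beta inner_real_def real_scaleR_def)
  finally show "((\<chi> j j'. \<Sum>i\<in>X. w i * V j i * V j' i) *v x) $ j =
     (\<Sum>i\<in>X. (w i * ((\<chi> j. V j i) \<bullet> x)) *\<^sub>R (\<chi> j. V j i)) $ j" .
qed

theorem lemma9:
  fixes T :: "'x::finite \<Rightarrow> 'x \<Rightarrow> 'a::finite \<Rightarrow> real"
    and Ob :: "'y::finite \<Rightarrow> 'x \<Rightarrow> real"
    and pol :: "'y \<Rightarrow> 'a" and l :: 'a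
    and U :: "real^'y^'y" and s :: "real^'y" and tau :: "'x \<Rightarrow> 'y"
  assumes "romdp T Ob" and "assumption1 T Ob" and "assumption2 T"
    and eig: "orthogonal_matrix U" "M2 T Ob pol l = U ** diag_mat s ** transpose U"
    and simple: "\<forall>k k'. k \<noteq> k' \<and> s $ k \<noteq> 0 \<longrightarrow> s $ k \<noteq> s $ k'"
    and idx: "bij_betw tau (Xpi T Ob pol l) {k. s $ k \<noteq> 0}"
  shows "\<exists>(sigma :: 'x \<Rightarrow> 'x) (C :: 'x \<Rightarrow> real).
           sigma ` Xpi T Ob pol l \<subseteq> Xpi T Ob pol l \<and>
           (\<forall>i\<in>Xpi T Ob pol l. \<forall>j. V2 T Ob pol l j (sigma i) = C i * U $ j $ tau i) \<and>
           (\<forall>i\<in>Xpi T Ob pol l. \<forall>j j'. j \<in> cluster U (tau i) \<and> j' \<in> cluster U (tau i) \<longrightarrow>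
                j \<in> obs_set Ob (sigma i) \<and> j' \<in> obs_set Ob (sigma i))"
proof -
  define X where "X = Xpi T Ob pol l"
  define w where "w = omega T Ob pol l"
  define V where "V = V2 T Ob pol l"
  define v where "v i = (\<chi> j. V j i)" for i
  define M where "M = M2 T Ob pol l"
  have nonneg: "\<And>j i. Ob j i \<ge> 0" and uniq: "\<And>j. \<exists>!i. Ob j i > 0"
    using assms(1) unfolding romdp_def by auto
  have Vnz: "Ob j i > 0" if "V j i \<noteq> 0" for j i
  proof -
    have "Ob j i \<noteq> 0" using that by (auto simp: V_def V2_def joint_xya_def)
    with nonneg[of j i] show ?thesis by linarith
  qed
  have orthv: "v i \<bullet> v i' = 0" if "i \<noteq> i'" for i i'
  proof -
    have "V j i * V j i' = 0" for j
    proof (rule ccontr)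
      assume "V j i * V j i' \<noteq> 0"
      then have "Ob j i > 0" "Ob j i' > 0" using Vnz by auto
      then show False using uniq[of j] that by auto
    qed
    then have "(\<Sum>j\<in>UNIV. V j i * V j i') = 0" by (simp only: sum.neutral_const)
    then show ?thesis by (simp add: v_def inner_vec_def)
  qed
  have Mact: "M *v x = (\<Sum>i\<in>X. (w i * (v i \<bullet> x)) *\<^sub>R v i)" for x
    unfolding M_def M2_def X_def w_def v_def V_def by (rule M2_act)
  have sumdelta: "v i' \<bullet> (\<Sum>i\<in>X. c i *\<^sub>R v i) = c i' * (v i' \<bullet> v i')" if "i' \<in> X" for c i'
  proof -
    have "v i' \<bullet> (\<Sum>i\<in>X. c i *\<^sub>R v i) = (\<Sum>i\<in>X. if i = i' then c i' * (v i' \<bullet> v i') else 0)"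
      unfolding inner_sum_right by (rule sum.cong) (auto simp: orthv inner_commute)
    then show ?thesis using that by simp
  qed
  have sumcol: "(\<Sum>i\<in>X. (w i * (v i \<bullet> v i')) *\<^sub>R v i) = (w i' * (v i' \<bullet> v i')) *\<^sub>R v i'"
    if "i' \<in> X" for i'
  proof -
    have "(\<Sum>i\<in>X. (w i * (v i \<bullet> v i')) *\<^sub>R v i) = (\<Sum>i\<in>X. if i = i' then (w i' * (v i' \<bullet> v i')) *\<^sub>R v i' else 0)"
      by (rule sum.cong) (auto simp: orthv)
    then show ?thesis using that by simp
  qed
  have o1: "transpose U ** U = mat 1" using eig(1) by (simp add: orthogonal_matrix_def)
  have main: "\<forall>i\<in>X. \<exists>i'. i' \<in> X \<and> (\<exists>c. c \<noteq> 0 \<and> v i' = c *\<^sub>R column (tau i) U)"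
  proof
    fix i assume i: "i \<in> X"
    define k where "k = tau i"
    have sk: "s $ k \<noteq> 0" using idx i unfolding k_def X_def bij_betw_def by auto
    define u where "u = column k U"
    have "(transpose U ** U) $ k $ k = 1" by (simp add: o1 mat_def)
    then have uu: "u \<bullet> u = 1"
      by (simp add: matrix_matrix_mult_def transpose_def u_def column_def inner_vec_def)
    have MU: "M ** U = U ** diag_mat s"
      proof -
      have "(U ** diag_mat s ** transpose U) ** U = (U ** diag_mat s) ** (transpose U ** U)"
        by (simp only: matrix_mul_assoc)
      then show ?thesis unfolding M_def eig(2) o1 matrix_mul_rid .
    qed
    have Mu: "M *v u = s $ k *\<^sub>R u"
    proof (rule myvecI)
      fix j
      have "(M *v u) $ j = (M ** U) $ j $ k"
        by (simp add: matrix_vector_mult_def matrix_matrix_mult_def u_def column_def)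
      also have "\<dots> = (\<Sum>k'\<in>UNIV. if k' = k then U $ j $ k * s $ k else 0)"
      proof -
        have h: "\<And>k'. U $ j $ k' * (diag_mat s) $ k' $ k = (if k' = k then U $ j $ k * s $ k else 0)"
          by (simp add: diag_mat_def)
        show ?thesis unfolding MU by (unfold matrix_matrix_mult_def, simp only: vec_lambda_beta h)
      qed
      also have "\<dots> = U $ j $ k * s $ k" by simp
      finally show "(M *v u) $ j = (s $ k *\<^sub>R u) $ j" by (simp add: u_def column_def)
    qed
    obtain i' where i': "i' \<in> X" "v i' \<bullet> u \<noteq> 0"
    proof (rule ccontr)
      assume "\<not> thesis"
      with that have "\<forall>i'\<in>X. v i' \<bullet> u = 0" by blast
      then have "M *v u = 0" unfolding Mact by (simp add: inner_commute)
      with Mu sk have "u = 0" by simp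
      with uu show False by simp
    qed
    define lam where "lam = w i' * (v i' \<bullet> v i')"
    have "v i' \<bullet> (M *v u) = lam * (v i' \<bullet> u)"
      unfolding Mact sumdelta[OF i'(1)] lam_def by (simp add: inner_commute)
    moreover have "v i' \<bullet> (M *v u) = s $ k * (v i' \<bullet> u)" by (simp add: Mu)
    ultimately have lamk: "lam = s $ k" using i'(2) by simp
    have "M *v v i' = lam *\<^sub>R v i'" unfolding Mact lam_def using sumcol[OF i'(1)] by (simp add: inner_commute)
    then have "M *v v i' = s $ k *\<^sub>R v i'" using lamk by simp
    then have veq: "v i' = (transpose U *v v i') $ k *\<^sub>R u"
      unfolding u_def by (rule eig1[OF eig(1) eig(2)[folded M_def] simple sk])
    have "(transpose U *v v i') $ k \<noteq> 0"
    proof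
      assume "(transpose U *v v i') $ k = 0"
      then have "v i' = 0" using veq by simp
      with i'(2) show False by simp
    qed
    with veq i'(1) show "\<exists>i'. i' \<in> X \<and> (\<exists>c. c \<noteq> 0 \<and> v i' = c *\<^sub>R column (tau i) U)"
      unfolding u_def k_def by blast
  qed
  from bchoice[OF main] obtain sigma where sig: "\<forall>i\<in>X. sigma i \<in> X \<and> (\<exists>c. c \<noteq> 0 \<and> v (sigma i) = c *\<^sub>R column (tau i) U)"
    ..
  have "\<forall>i\<in>X. \<exists>c. c \<noteq> 0 \<and> v (sigma i) = c *\<^sub>R column (tau i) U"
    using sig by blast
  from bchoice[OF this] obtain C where C: "\<forall>i\<in>X. C i \<noteq> 0 \<and> v (sigma i) = C i *\<^sub>R column (tau i) U"
    ..
  have comp: "V j (sigma i) = C i * U $ j $ tau i" if "i \<in> X" for i j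
  proof -
    have "v (sigma i) $ j = (C i *\<^sub>R column (tau i) U) $ j" using C that by simp
    then show ?thesis by (simp add: v_def column_def)
  qed
  have cl: "t \<in> obs_set Ob (sigma i)" if i: "i \<in> Xpi T Ob pol l" and t: "t \<in> cluster U (tau i)" for i t
  proof -
    have "U $ t $ tau i \<noteq> 0" using t by (simp add: cluster_def)
    moreover have "C i \<noteq> 0" using C i X_def by simp
    ultimately have "V t (sigma i) \<noteq> 0" using comp[of i t] i X_def by simp
    then show ?thesis by (simp add: Vnz obs_set_def)
  qed
  show ?thesis
  proof (intro exI conjI ballI allI impI)
    show "sigma ` Xpi T Ob pol l \<subseteq> Xpi T Ob pol l" using sig X_def by auto
  next
    fix i j assume "i \<in> Xpi T Ob pol l"
    then show "V2 T Ob pol l j (sigma i) = C i * U $ j $ tau i" using comp X_def V_def by simp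
  next
    fix i j j' assume "i \<in> Xpi T Ob pol l" and "j \<in> cluster U (tau i) \<and> j' \<in> cluster U (tau i)"
    then show "j \<in> obs_set Ob (sigma i)" using cl by blast
  next
    fix i j j' assume "i \<in> Xpi T Ob pol l" and "j \<in> cluster U (tau i) \<and> j' \<in> cluster U (tau i)"
    then show "j' \<in> obs_set Ob (sigma i)" using cl by blast
  qed
qed
end
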